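(* Let $N\in\{2,3,\dots\}$ and $C\ge1$. There is $D=D(N,C)>0$ such that every geodesic metric tree $T$ with $\mathrm{val}(T)\le N$ and uniform branch separation with constant $C$ is $D$-doubling.
   Context: A metric tree is a compact connected locally connected metric space with at least two points where any two points are joined by a unique arc. Branches of $T$ at $p$: components of $T\setminus\{p\}$; $\mathrm{val}(p,T)$ their number, $\mathrm{val}(T)=\sup_p\mathrm{val}(p,T)$; branch points have valence $\ge3$. Label branches $B^1_T(p),B^2_T(p),\dots$ with non-increasing diameters, $H_T(p)=\mathrm{diam}B^3_T(p)$. Uniform branch separation with constant $C$: $d(p,q)\ge C^{-1}\min\{H_T(p),H_T(q)\}$ for all distinct branch points $p,q$. Geodesic: any two points $x,y$ joined by a curve isometric to an interval of length $d(x,y)$. $D$-doubling: every ball can be covered by at most $D$ balls of half its radius. *)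

theory Defs
  imports "HOL-Analysis.Analysis" "HOL-Library.Multiset"
begin

definition arc_in :: "'a topology \<Rightarrow> (real \<Rightarrow> 'a) \<Rightarrow> bool" where
  "arc_in X g \<longleftrightarrow> pathin X g \<and> inj_on g {0..1}"

definition metric_tree :: "'a metric \<Rightarrow> bool" where
  "metric_tree m \<longleftrightarrow>
     compact_space (mtopology_of m) \<and> connected_space (mtopology_of m) \<and>
     locally_connected_space (mtopology_of m) \<and>
     (\<exists>x\<in>mspace m. \<exists>y\<in>mspace m. x \<noteq> y) \<and>
     (\<forall>x\<in>mspace m. \<forall>y\<in>mspace m. x \<noteq> y \<longrightarrow>
        (\<exists>!A. \<exists>g. arc_in (mtopology_of m) g \<and> g 0 = x \<and> g 1 = y \<and> A = g ` {0..1}))"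

definition branches :: "'a metric \<Rightarrow> 'a \<Rightarrow> 'a set set" where
  "branches m p = connected_components_of (subtopology (mtopology_of m) (mspace m - {p}))"

definition mdiam :: "'a metric \<Rightarrow> 'a set \<Rightarrow> real" where
  "mdiam m S = Sup {mdist m x y | x y. x \<in> S \<and> y \<in> S}"

definition valence_le :: "'a metric \<Rightarrow> nat \<Rightarrow> bool" where
  "valence_le m N \<longleftrightarrow> (\<forall>p\<in>mspace m. finite (branches m p) \<and> card (branches m p) \<le> N)"

definition branch_point :: "'a metric \<Rightarrow> 'a \<Rightarrow> bool" where
  "branch_point m p \<longleftrightarrow> p \<in> mspace m \<and> (infinite (branches m p) \<or> card (branches m p) \<ge> 3)"

text \<open>H_T(p): diameter of the third branch when the (finitely many) branches are
  listed with non-increasing diameters (ties counted with multiplicity).\<close>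
definition Hbr :: "'a metric \<Rightarrow> 'a \<Rightarrow> real" where
  "Hbr m p = rev (sorted_list_of_multiset (image_mset (mdiam m) (mset_set (branches m p)))) ! 2"

definition uniform_branch_separation :: "'a metric \<Rightarrow> real \<Rightarrow> bool" where
  "uniform_branch_separation m C \<longleftrightarrow>
     (\<forall>p q. branch_point m p \<and> branch_point m q \<and> p \<noteq> q \<longrightarrow>
        mdist m p q \<ge> min (Hbr m p) (Hbr m q) / C)"

definition geodesic_space :: "'a metric \<Rightarrow> bool" where
  "geodesic_space m \<longleftrightarrow>
     (\<forall>x\<in>mspace m. \<forall>y\<in>mspace m. \<exists>\<gamma>::real \<Rightarrow> 'a.
        \<gamma> ` {0..mdist m x y} \<subseteq> mspace m \<and> \<gamma> 0 = x \<and> \<gamma> (mdist m x y) = y \<and>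
        (\<forall>s\<in>{0..mdist m x y}. \<forall>t\<in>{0..mdist m x y}. mdist m (\<gamma> s) (\<gamma> t) = \<bar>s - t\<bar>))"

definition doubling :: "'a metric \<Rightarrow> real \<Rightarrow> bool" where
  "doubling m D \<longleftrightarrow>
     (\<forall>x\<in>mspace m. \<forall>r>0. \<exists>F. finite F \<and> F \<subseteq> mspace m \<and> real (card F) \<le> D \<and>
        mball_of m x r \<subseteq> (\<Union>c\<in>F. mball_of m c (r / 2)))"

end

theory Submission
  imports Defs
begin
locale tctx =
  fixes m :: "'a metric"
  assumes tree: "metric_tree m" and geod: "geodesic_space m"
begin

sublocale MS: Metric_space "mspace m" "mdist m"
  by (rule Metric_space_mspace_mdist)

abbreviation "M \<equiv> mspace m"
abbreviation "d \<equiv> mdist m"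

lemma mtop: "mtopology_of m = MS.mtopology"
  by (simp add: mtopology_of_def)

lemma lip_cont:
  assumes L: "0 < L" and inM: "\<And>t. t\<in>{0..L} \<Longrightarrow> h t \<in> M"
    and lip: "\<And>s t. s\<in>{0..L} \<Longrightarrow> t\<in>{0..L} \<Longrightarrow> d (h s) (h t) \<le> \<bar>s-t\<bar>"
  shows "pathin (mtopology_of m) (\<lambda>t. h (L*t))"
  unfolding pathin_def mtop MS.continuous_map_to_metric
proof (intro ballI allI impI)
  fix x and e::real assume x: "x \<in> topspace (subtopology euclideanreal {0..1})" and e: "0 < e"
  have x01: "x \<in> {0..1}" using x by simp
  let ?U = "ball x (e/L) \<inter> {0..1}"
  have "openin (subtopology euclideanreal {0..1}) ?U"
    unfolding openin_subtopology by auto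
  moreover have "x \<in> ?U" using x01 e L by auto
  moreover have "h (L*y) \<in> MS.mball (h (L*x)) e" if y: "y \<in> ?U" for y
  proof -
    have y01: "y \<in> {0..1}" and dy: "dist x y < e/L" using y by auto
    have a: "L*x \<in> {0..L}" "L*y \<in> {0..L}" using x01 y01 L
      by (auto simp: mult_le_cancel_left1 mult_nonneg_nonneg)
    have "d (h (L*x)) (h (L*y)) \<le> \<bar>L*x - L*y\<bar>" using lip a by blast
    also have "\<dots> = L * dist x y" using L by (simp add: dist_real_def abs_mult right_diff_distrib[symmetric])
    also have "\<dots> < e" using dy L by (simp add: pos_less_divide_eq mult.commute)
    finally show ?thesis using inM a by auto
  qed
  ultimately show "\<exists>U. openin (subtopology euclideanreal {0..1}) U \<and> x \<in> U \<and>
         (\<forall>y\<in>U. h (L*y) \<in> MS.mball (h (L*x)) e)" by blast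
qed

lemma lip_arc:
  assumes L: "0 < L" and inM: "\<And>t. t\<in>{0..L} \<Longrightarrow> h t \<in> M"
    and lip: "\<And>s t. s\<in>{0..L} \<Longrightarrow> t\<in>{0..L} \<Longrightarrow> d (h s) (h t) \<le> \<bar>s-t\<bar>"
    and inj: "inj_on h {0..L}"
  shows "arc_in (mtopology_of m) (\<lambda>t. h (L*t))"
  unfolding arc_in_def
proof
  show "pathin (mtopology_of m) (\<lambda>t. h (L*t))" by (rule lip_cont[OF assms(1-3)])
  show "inj_on (\<lambda>t. h (L*t)) {0..1}"
  proof (rule inj_onI)
    fix a b assume a: "a \<in> {0..1}" and b: "b \<in> {0..1}" and e: "h (L*a) = h (L*b)"
    have "L*a \<in> {0..L}" "L*b \<in> {0..L}" using a b L by (auto simp: mult_le_cancel_left1)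
    then have "L*a = L*b" using inj e by (meson inj_onD)
    then show "a = b" using L by simp
  qed
qed

lemma scale_img: "0 < L \<Longrightarrow> (\<lambda>t. h (L*t)) ` {0..1} = h ` {0..(L::real)}"
proof -
  assume L: "0 < L"
  have "(\<lambda>t. h (L*t)) ` {0..1} = h ` ((*) L ` {0..1})" by (simp add: image_image)
  also have "(*) L ` {0..1} = {0..L}" using L by simp
  finally show ?thesis .
qed

lemma lip_arc_unique:
  assumes L1: "0 < L1" and inM1: "\<And>t. t\<in>{0..L1} \<Longrightarrow> h1 t \<in> M"
    and lip1: "\<And>s t. s\<in>{0..L1} \<Longrightarrow> t\<in>{0..L1} \<Longrightarrow> d (h1 s) (h1 t) \<le> \<bar>s-t\<bar>"
    and inj1: "inj_on h1 {0..L1}"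
    and L2: "0 < L2" and inM2: "\<And>t. t\<in>{0..L2} \<Longrightarrow> h2 t \<in> M"
    and lip2: "\<And>s t. s\<in>{0..L2} \<Longrightarrow> t\<in>{0..L2} \<Longrightarrow> d (h2 s) (h2 t) \<le> \<bar>s-t\<bar>"
    and inj2: "inj_on h2 {0..L2}"
    and e0: "h1 0 = h2 0" and e1: "h1 L1 = h2 L2"
  shows "h1 ` {0..L1} = h2 ` {0..L2}"
proof -
  have a1: "arc_in (mtopology_of m) (\<lambda>t. h1 (L1*t))" by (rule lip_arc[OF L1 inM1 lip1 inj1])
  have a2: "arc_in (mtopology_of m) (\<lambda>t. h2 (L2*t))" by (rule lip_arc[OF L2 inM2 lip2 inj2])
  have x: "h1 0 \<in> M" and y: "h1 L1 \<in> M" using inM1 L1 by auto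
  have ne: "h1 0 \<noteq> h1 L1" using inj1 L1 by (auto dest: inj_onD)
  from tree x y ne have "\<exists>!A. \<exists>g. arc_in (mtopology_of m) g \<and> g 0 = h1 0 \<and> g 1 = h1 L1 \<and> A = g ` {0..1}"
    unfolding metric_tree_def by blast
  moreover have "\<exists>g. arc_in (mtopology_of m) g \<and> g 0 = h1 0 \<and> g 1 = h1 L1 \<and> h1 ` {0..L1} = g ` {0..1}"
    using a1 scale_img[OF L1, of h1] by (intro exI[of _ "\<lambda>t. h1 (L1*t)"]) auto
  moreover have "\<exists>g. arc_in (mtopology_of m) g \<and> g 0 = h1 0 \<and> g 1 = h1 L1 \<and> h2 ` {0..L2} = g ` {0..1}"
    using a2 scale_img[OF L2, of h2] e0 e1 by (intro exI[of _ "\<lambda>t. h2 (L2*t)"]) auto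
  ultimately show ?thesis by blast
qed

end

context tctx begin

definition geo :: "'a \<Rightarrow> 'a \<Rightarrow> real \<Rightarrow> 'a" where
  "geo x y = (SOME \<gamma>. \<gamma> ` {0..d x y} \<subseteq> M \<and> \<gamma> 0 = x \<and> \<gamma> (d x y) = y \<and>
        (\<forall>s\<in>{0..d x y}. \<forall>t\<in>{0..d x y}. d (\<gamma> s) (\<gamma> t) = \<bar>s - t\<bar>))"

definition seg :: "'a \<Rightarrow> 'a \<Rightarrow> 'a set" where
  "seg x y = geo x y ` {0..d x y}"

lemma geo:
  assumes "x \<in> M" "y \<in> M"
  shows "geo x y ` {0..d x y} \<subseteq> M" "geo x y 0 = x" "geo x y (d x y) = y"
    "\<And>s t. s\<in>{0..d x y} \<Longrightarrow> t\<in>{0..d x y} \<Longrightarrow> d (geo x y s) (geo x y t) = \<bar>s - t\<bar>"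
proof -
  from geod assms have ex: "\<exists>\<gamma>. \<gamma> ` {0..d x y} \<subseteq> M \<and> \<gamma> 0 = x \<and> \<gamma> (d x y) = y \<and>
        (\<forall>s\<in>{0..d x y}. \<forall>t\<in>{0..d x y}. d (\<gamma> s) (\<gamma> t) = \<bar>s - t\<bar>)"
    unfolding geodesic_space_def by blast
  have "geo x y ` {0..d x y} \<subseteq> M \<and> geo x y 0 = x \<and> geo x y (d x y) = y \<and>
        (\<forall>s\<in>{0..d x y}. \<forall>t\<in>{0..d x y}. d (geo x y s) (geo x y t) = \<bar>s - t\<bar>)"
    unfolding geo_def by (rule someI_ex[OF ex])
  then show "geo x y ` {0..d x y} \<subseteq> M" "geo x y 0 = x" "geo x y (d x y) = y"
    "\<And>s t. s\<in>{0..d x y} \<Longrightarrow> t\<in>{0..d x y} \<Longrightarrow> d (geo x y s) (geo x y t) = \<bar>s - t\<bar>"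
    by auto
qed

lemma geoM: "x \<in> M \<Longrightarrow> y \<in> M \<Longrightarrow> t \<in> {0..d x y} \<Longrightarrow> geo x y t \<in> M"
  using geo(1) by blast

lemma geo_dist0: "x \<in> M \<Longrightarrow> y \<in> M \<Longrightarrow> t \<in> {0..d x y} \<Longrightarrow> d x (geo x y t) = t"
proof -
  assume a: "x \<in> M" "y \<in> M" "t \<in> {0..d x y}"
  have "d (geo x y 0) (geo x y t) = \<bar>0 - t\<bar>" by (rule geo(4)) (use a in auto)
  then show ?thesis using geo(2)[OF a(1,2)] a by simp
qed

lemma geo_dist1: "x \<in> M \<Longrightarrow> y \<in> M \<Longrightarrow> t \<in> {0..d x y} \<Longrightarrow> d (geo x y t) y = d x y - t"
proof -
  assume a: "x \<in> M" "y \<in> M" "t \<in> {0..d x y}"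
  have "d (geo x y t) (geo x y (d x y)) = \<bar>t - d x y\<bar>" by (rule geo(4)) (use a in auto)
  then show ?thesis using geo(3)[OF a(1,2)] a by simp
qed

lemma iso_inj:
  assumes "\<And>s t. s\<in>{0..L} \<Longrightarrow> t\<in>{0..L} \<Longrightarrow> d (h s) (h t) = \<bar>s - t\<bar>"
    and "\<And>t. t\<in>{0..L} \<Longrightarrow> h t \<in> M"
  shows "inj_on h {0..(L::real)}"
proof (rule inj_onI)
  fix s t assume "s \<in> {0..L}" "t \<in> {0..L}" "h s = h t"
  moreover have "d (h s) (h t) = \<bar>s - t\<bar>" using assms(1) \<open>s \<in> {0..L}\<close> \<open>t \<in> {0..L}\<close> by blast
  ultimately have "\<bar>s - t\<bar> = 0" using assms(2) by auto
  then show "s = t" by simp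
qed

lemma iso_seg:
  assumes inM: "\<And>t. t\<in>{0..L} \<Longrightarrow> h t \<in> M"
    and iso: "\<And>s t. s\<in>{0..L} \<Longrightarrow> t\<in>{0..L} \<Longrightarrow> d (h s) (h t) = \<bar>s - t\<bar>"
    and L: "0 \<le> L" and h0: "h 0 = x" and hL: "h L = y"
  shows "h ` {0..L} = seg x y"
proof -
  have x: "x \<in> M" and y: "y \<in> M" using inM L h0 hL by auto
  have dxy: "d x y = L" using iso[of 0 L] L h0 hL by auto
  show ?thesis
  proof (cases "L = 0")
    case True
    then show ?thesis using dxy h0 geo(2)[OF x y] by (simp add: seg_def)
  next
    case False
    then have Lp: "0 < L" using L by simp
    show ?thesis unfolding seg_def dxy
    proof (rule lip_arc_unique[OF Lp inM _ _ Lp])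
      show "\<And>s t. s \<in> {0..L} \<Longrightarrow> t \<in> {0..L} \<Longrightarrow> d (h s) (h t) \<le> \<bar>s - t\<bar>" using iso by simp
      show "inj_on h {0..L}" by (rule iso_inj[OF iso inM])
      show "\<And>t. t \<in> {0..L} \<Longrightarrow> geo x y t \<in> M" using geoM[OF x y] dxy by simp
      show "\<And>s t. s \<in> {0..L} \<Longrightarrow> t \<in> {0..L} \<Longrightarrow> d (geo x y s) (geo x y t) \<le> \<bar>s - t\<bar>"
        using geo(4)[OF x y] dxy by simp
      show "inj_on (geo x y) {0..L}" 
        by (rule iso_inj) (use geo(4)[OF x y] geoM[OF x y] dxy in auto)
      show "h 0 = geo x y 0" using h0 geo(2)[OF x y] by simp
      show "h L = geo x y L" using hL geo(3)[OF x y] dxy by simp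
    qed
  qed
qed

lemma seg_sub: "x \<in> M \<Longrightarrow> y \<in> M \<Longrightarrow> seg x y \<subseteq> M"
  using geo(1) by (simp add: seg_def)

lemma seg_imp: "x \<in> M \<Longrightarrow> y \<in> M \<Longrightarrow> z \<in> seg x y \<Longrightarrow> d x z + d z y = d x y"
  unfolding seg_def using geo_dist0 geo_dist1 by fastforce

lemma seg_param: "x \<in> M \<Longrightarrow> y \<in> M \<Longrightarrow> z \<in> seg x y \<Longrightarrow> z = geo x y (d x z) \<and> d x z \<in> {0..d x y}"
  unfolding seg_def using geo_dist0 by fastforce

lemma betw_seg:
  assumes x: "x \<in> M" and y: "y \<in> M" and z: "z \<in> M" and e: "d x z + d z y = d x y"
  shows "z \<in> seg x y"
proof -
  define a where "a = d x z"
  define b where "b = d z y"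
  define h where "h t = (if t \<le> a then geo x z t else geo z y (t - a))" for t
  have a0: "0 \<le> a" and b0: "0 \<le> b" by (auto simp: a_def b_def)
  have hM: "h t \<in> M" if "t \<in> {0..a+b}" for t
    using that geoM[OF x z] geoM[OF z y] by (auto simp: h_def a_def b_def)
  have hz: "h a = z" using geo(3)[OF x z] by (simp add: h_def a_def)
  have d1: "d (h s) z = a - s" if "s \<in> {0..a}" for s
    using that geo_dist1[OF x z, of s] by (simp add: h_def a_def)
  have d2: "d z (h t) = t - a" if "t \<in> {a..a+b}" for t
  proof (cases "t = a")
    case True then show ?thesis using hz z by simp
  next
    case False then show ?thesis using that geo_dist0[OF z y, of "t-a"] by (simp add: h_def a_def b_def)
  qed
  have cross: "d (h s) (h t) = t - s" if s: "s \<in> {0..a}" and t: "t \<in> {a..a+b}" for s t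
  proof -
    have hs: "h s \<in> M" and ht: "h t \<in> M" using hM s t a0 b0 by auto
    have "d (h s) (h t) \<le> d (h s) z + d z (h t)" using hs ht z by (simp add: mdist_triangle)
    also have "\<dots> = t - s" using d1[OF s] d2[OF t] by simp
    finally have le: "d (h s) (h t) \<le> t - s" .
    have hx: "d x (h s) = s" using s geo_dist0[OF x z, of s] by (simp add: h_def a_def)
    have hy: "d (h t) y = a + b - t"
    proof (cases "t = a")
      case True then show ?thesis using hz by (simp add: b_def)
    next
      case False then show ?thesis using t geo_dist1[OF z y, of "t-a"] by (simp add: h_def a_def b_def)
    qed
    have "d x y \<le> d x (h s) + d (h s) y" using x y hs by (simp add: mdist_triangle)
    also have "d (h s) y \<le> d (h s) (h t) + d (h t) y" using y hs ht by (simp add: mdist_triangle)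
    finally have "a + b \<le> s + d (h s) (h t) + (a + b - t)" using hx hy e by (simp add: a_def b_def)
    then show ?thesis using le by simp
  qed
  have iso: "d (h s) (h t) = \<bar>s - t\<bar>" if s: "s \<in> {0..a+b}" and t: "t \<in> {0..a+b}" for s t
  proof -
    consider "s \<le> a" "t \<le> a" | "s \<le> a" "a \<le> t" | "a \<le> s" "t \<le> a" | "a < s" "a < t" by linarith
    then show ?thesis
    proof cases
      case 1 then show ?thesis using s t geo(4)[OF x z, of s t] by (simp add: h_def a_def)
    next
      case 2 then show ?thesis using s t cross[of s t] by auto
    next
      case 3 then show ?thesis using s t cross[of t s] by (auto simp: mdist_commute)
    next
      case 4 then show ?thesis using s t geo(4)[OF z y, of "s-a" "t-a"] by (simp add: h_def a_def b_def)
    qed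
  qed
  have hend: "h (a+b) = y"
  proof (cases "b = 0")
    case True then show ?thesis using hz z y by (simp add: b_def)
  next
    case False then have "\<not> a + b \<le> a" using b0 by simp
    then show ?thesis using geo(3)[OF z y] by (simp add: h_def a_def b_def)
  qed
  have "h ` {0..a+b} = seg x y"
    by (rule iso_seg[OF hM iso]) (use a0 b0 geo(2)[OF x z] hend in \<open>auto simp: h_def a_def b_def\<close>)
  moreover have "z \<in> h ` {0..a+b}" using hz a0 b0 by force
  ultimately show ?thesis by simp
qed

lemma seg_char: "x \<in> M \<Longrightarrow> y \<in> M \<Longrightarrow> z \<in> seg x y \<longleftrightarrow> z \<in> M \<and> d x z + d z y = d x y"
  using seg_imp seg_sub betw_seg by blast

lemma seg_sym: "x \<in> M \<Longrightarrow> y \<in> M \<Longrightarrow> seg x y = seg y x"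
  using seg_char by (auto simp: mdist_commute add.commute)

end

context tctx begin

lemma seg_trans:
  assumes w: "w \<in> M" and z: "z \<in> M" and c: "c \<in> seg w z" and q: "q \<in> seg c z"
  shows "q \<in> seg w z"
proof -
  have cM: "c \<in> M" using c seg_sub[OF w z] by blast
  have qM: "q \<in> M" using q seg_sub[OF cM z] by blast
  have e1: "d w c + d c z = d w z" using seg_imp[OF w z c] .
  have e2: "d c q + d q z = d c z" using seg_imp[OF cM z q] .
  have "d w q \<le> d w c + d c q" using w cM qM by (simp add: mdist_triangle)
  moreover have "d w z \<le> d w q + d q z" using w z qM by (simp add: mdist_triangle)
  ultimately have "d w q + d q z = d w z" using e1 e2 by linarith
  then show ?thesis using betw_seg[OF w z qM] by simp
qed

lemma seg_end1: "x \<in> M \<Longrightarrow> y \<in> M \<Longrightarrow> x \<in> seg x y"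
  using seg_char by simp
lemma seg_end2: "x \<in> M \<Longrightarrow> y \<in> M \<Longrightarrow> y \<in> seg x y"
  using seg_char by simp
lemma seg_same: "x \<in> M \<Longrightarrow> seg x x = {x}"
  using seg_char by (auto simp: mdist_commute)

lemma tripod:
  assumes u: "u \<in> M" and w: "w \<in> M" and z: "z \<in> M"
  shows "\<exists>c. c \<in> seg w u \<and> c \<in> seg w z \<and> c \<in> seg u z \<and> seg u z \<subseteq> seg w u \<union> seg w z"
proof (cases "u = z")
  case True
  then show ?thesis using seg_same[OF u] seg_end2[OF w u] seg_end2[OF w z]
    by (intro exI[of _ u]) auto
next
  case False
  define a where "a = d w u"
  define b where "b = d w z"
  define g1 where "g1 = geo w u"
  define f where "f s = s + d (g1 s) z" for s
  define S where "S = {s \<in> {0..a}. f s = b}"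
  have a0: "0 \<le> a" by (simp add: a_def)
  have g1M: "g1 s \<in> M" if "s \<in> {0..a}" for s using geoM[OF w u] that by (simp add: g1_def a_def)
  have g1iso: "d (g1 s) (g1 t) = \<bar>s - t\<bar>" if "s \<in> {0..a}" "t \<in> {0..a}" for s t
    using geo(4)[OF w u] that by (simp add: g1_def a_def)
  have g1d: "d w (g1 s) = s" if "s \<in> {0..a}" for s using geo_dist0[OF w u] that by (simp add: g1_def a_def)
  have "1-lipschitz_on {0..a} (\<lambda>s. d (g1 s) z)"
  proof (rule lipschitz_onI)
    fix s t assume s: "s \<in> {0..a}" and t: "t \<in> {0..a}"
    have "\<bar>d (g1 s) z - d (g1 t) z\<bar> \<le> d (g1 s) (g1 t)"
      using MS.mdist_reverse_triangle[of "g1 s" z "g1 t"] g1M[OF s] g1M[OF t] z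
      by (smt (verit, best) mdist_commute mdist_triangle)
    then show "dist (d (g1 s) z) (d (g1 t) z) \<le> 1 * dist s t"
      using g1iso[OF s t] by (simp add: dist_real_def)
  qed simp
  then have "continuous_on {0..a} (\<lambda>s. d (g1 s) z)" by (rule lipschitz_on_continuous_on)
  then have cf: "continuous_on {0..a} f" unfolding f_def by (intro continuous_intros)
  have "closed S" unfolding S_def by (rule continuous_closed_preimage_constant[OF cf]) simp
  have cS: "compact ({0..a} \<inter> S)" using compact_Int_closed[OF compact_Icc \<open>closed S\<close>] .
  have "{0..a} \<inter> S = S" unfolding S_def by blast
  with cS have "compact S" by simp
  moreover have "0 \<in> S" using a0 geo(2)[OF w u] by (simp add: S_def f_def g1_def b_def)
  ultimately obtain s0 where s0: "s0 \<in> S" and smax0: "\<forall>t\<in>S. t \<le> s0"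
    using compact_attains_sup[of S] by auto
  have smax: "\<And>t. t \<in> S \<Longrightarrow> t \<le> s0" using smax0 by blast
  have s0a: "s0 \<in> {0..a}" and fs0: "s0 + d (g1 s0) z = b" using s0 by (auto simp: S_def f_def)
  define c where "c = g1 s0"
  have cM: "c \<in> M" using g1M[OF s0a] by (simp add: c_def)
  have cwu: "c \<in> seg w u" unfolding seg_def c_def g1_def a_def using s0a a_def by auto
  have dwc: "d w c = s0" using g1d[OF s0a] by (simp add: c_def)
  have cwz: "c \<in> seg w z" using betw_seg[OF w z cM] fs0 dwc by (simp add: b_def c_def)
  have segcz: "q \<in> seg w z" if "q \<in> seg c z" for q using seg_trans[OF w z cwz that] .
  define e where "e = d c z"
  define l where "l = a - s0"
  define L where "L = l + e"
  define g2 where "g2 = geo c z"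
  define h where "h t = (if t \<le> l then g1 (a - t) else g2 (t - l))" for t
  have l0: "0 \<le> l" and e0: "0 \<le> e" using s0a by (auto simp: l_def e_def)
  have g2M: "g2 s \<in> M" if "s \<in> {0..e}" for s using geoM[OF cM z] that by (simp add: g2_def e_def)
  have g2iso: "d (g2 s) (g2 t) = \<bar>s - t\<bar>" if "s \<in> {0..e}" "t \<in> {0..e}" for s t
    using geo(4)[OF cM z] that by (simp add: g2_def e_def)
  have g2d: "d c (g2 s) = s" if "s \<in> {0..e}" for s using geo_dist0[OF cM z] that by (simp add: g2_def e_def)
  have hM: "h t \<in> M" if t: "t \<in> {0..L}" for t
  proof (cases "t \<le> l")
    case True
    then have "a - t \<in> {0..a}" using t s0a by (auto simp: l_def)
    then show ?thesis using g1M True by (simp add: h_def)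
  next
    case False
    then have "t - l \<in> {0..e}" using t by (auto simp: L_def)
    then show ?thesis using g2M False by (simp add: h_def)
  qed
  have h0: "h 0 = u" using l0 geo(3)[OF w u] by (simp add: h_def g1_def a_def)
  have hL: "h L = z"
  proof (cases "e = 0")
    case True
    then have "c = z" using cM z by (simp add: e_def)
    then show ?thesis using True by (simp add: h_def L_def l_def c_def)
  next
    case False
    then have "\<not> L \<le> l" using e0 by (simp add: L_def)
    then show ?thesis using geo(3)[OF cM z] by (simp add: h_def L_def g2_def e_def)
  qed
  have hl: "h l = c" by (simp add: h_def l_def c_def)
  have d1: "d (h s) c = l - s" if "s \<in> {0..l}" for s
    using that g1iso[of "a - s" s0] s0a by (simp add: h_def l_def c_def)
  have d2: "d c (h t) = t - l" if "t \<in> {l..L}" for t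
  proof (cases "t = l")
    case True then show ?thesis using hl cM by simp
  next
    case False then show ?thesis using that g2d[of "t - l"] by (simp add: h_def L_def)
  qed
  have lip: "d (h s) (h t) \<le> \<bar>s - t\<bar>" if s: "s \<in> {0..L}" and t: "t \<in> {0..L}" for s t
  proof -
    have cross: "d (h s) (h t) \<le> t - s" if s: "s \<in> {0..l}" and t: "t \<in> {l..L}" for s t
    proof -
      have "h s \<in> M" "h t \<in> M" using hM s t l0 e0 by (auto simp: L_def)
      then have "d (h s) (h t) \<le> d (h s) c + d c (h t)" using cM by (simp add: mdist_triangle)
      then show ?thesis using d1[OF s] d2[OF t] by simp
    qed
    consider "s \<le> l" "t \<le> l" | "s \<le> l" "l \<le> t" | "l \<le> s" "t \<le> l" | "l < s" "l < t" by linarith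
    then show ?thesis
    proof cases
      case 1 then show ?thesis using s t s0a g1iso[of "a - s" "a - t"] by (simp add: h_def l_def abs_minus_commute)
    next
      case 2 then show ?thesis using s t cross[of s t] by auto
    next
      case 3 then show ?thesis using s t cross[of t s] by (auto simp: mdist_commute)
    next
      case 4 then show ?thesis using s t g2iso[of "s - l" "t - l"] by (simp add: h_def L_def)
    qed
  qed
   have inj: "inj_on h {0..L}"
  proof (rule inj_onI)
    fix s t assume s: "s \<in> {0..L}" and t: "t \<in> {0..L}" and eq: "h s = h t"
    have cross: False if s: "s \<in> {0..l}" and t: "l < t" "t \<le> L" and eq: "h s = h t" for s t
    proof -
      define q where "q = h t"
      have qg2: "q = g2 (t - l)" using t by (simp add: q_def h_def)
      have tl: "t - l \<in> {0..e}" using t by (simp add: L_def)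
      have "q \<in> seg c z" unfolding seg_def qg2 g2_def using tl by (auto simp: e_def)
      then have qwz: "q \<in> seg w z" by (rule segcz)
      have sig: "a - s \<in> {0..a}" using s l0 s0a by (auto simp: l_def)
      have qg1: "q = g1 (a - s)" using s eq by (simp add: q_def h_def)
      have "d w q + d q z = b" using seg_imp[OF w z qwz] by (simp add: b_def)
      then have "a - s \<in> S" using sig g1d[OF sig] by (simp add: S_def f_def qg1)
      then have "a - s \<le> s0" by (rule smax)
      then have "a - s = s0" using s by (simp add: l_def)
      then have "q = c" using qg1 by (simp add: c_def)
      then have "d c (g2 (t - l)) = 0" using cM by (simp add: qg2)
      then show False using g2d[OF tl] t by simp
    qed
    consider "s \<le> l" "t \<le> l" | "s \<le> l" "l < t" | "l < s" "t \<le> l" | "l < s" "l < t" by linarith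
    then show "s = t"
    proof cases
      case 1
      have st: "a - s \<in> {0..a}" "a - t \<in> {0..a}" using s t s0a 1 by (auto simp: l_def)
      have "d (g1 (a-s)) (g1 (a-t)) = \<bar>(a-s) - (a-t)\<bar>" using g1iso[OF st] .
      moreover have "g1 (a-s) = g1 (a-t)" using eq 1 by (simp add: h_def)
      moreover have "g1 (a-s) \<in> M" using g1M[OF st(1)] .
      ultimately show ?thesis by simp
    next
      case 2 then show ?thesis using s t eq cross[of s t] by auto
    next
      case 3 then show ?thesis using s t eq cross[of t s] by auto
    next
      case 4
      have st: "s - l \<in> {0..e}" "t - l \<in> {0..e}" using s t 4 by (auto simp: L_def)
      have "d (g2 (s-l)) (g2 (t-l)) = \<bar>(s-l) - (t-l)\<bar>" using g2iso[OF st] .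
      moreover have "g2 (s-l) = g2 (t-l)" using eq 4 by (simp add: h_def)
      moreover have "g2 (s-l) \<in> M" using g2M[OF st(1)] .
      ultimately show ?thesis by simp
    qed
  qed
   have Lpos: "0 < L"
  proof (rule ccontr)
    assume "\<not> 0 < L"
    then have "L = 0" using l0 e0 by (simp add: L_def)
    then show False using h0 hL False by simp
  qed
  have duz: "0 < d u z" using u z False by simp
  have img: "h ` {0..L} = seg u z"
    unfolding seg_def
  proof (rule lip_arc_unique[OF Lpos hM lip inj duz])
    show "\<And>t. t \<in> {0..d u z} \<Longrightarrow> geo u z t \<in> M" using geoM[OF u z] by simp
    show "\<And>s t. s \<in> {0..d u z} \<Longrightarrow> t \<in> {0..d u z} \<Longrightarrow> d (geo u z s) (geo u z t) \<le> \<bar>s - t\<bar>"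
      using geo(4)[OF u z] by simp
    show "inj_on (geo u z) {0..d u z}"
      by (rule iso_inj) (use geo(4)[OF u z] geoM[OF u z] in auto)
    show "h 0 = geo u z 0" using h0 geo(2)[OF u z] by simp
    show "h L = geo u z (d u z)" using hL geo(3)[OF u z] by simp
  qed
  have "l \<in> {0..L}" using l0 e0 by (simp add: L_def)
  then have "c \<in> seg u z" using img hl by (metis image_eqI)
  moreover have "seg u z \<subseteq> seg w u \<union> seg w z"
  proof
    fix q assume "q \<in> seg u z"
    then have "q \<in> h ` {0..L}" using img by simp
    then obtain t where t: "t \<in> {0..L}" and q: "q = h t" by blast
    show "q \<in> seg w u \<union> seg w z"
    proof (cases "t \<le> l")
      case True
      then have "q = g1 (a - t)" "a - t \<in> {0..a}" using q t s0a by (auto simp: h_def l_def)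
      then have "q \<in> seg w u" unfolding seg_def g1_def a_def by auto
      then show ?thesis by simp
    next
      case False
      then have "q = g2 (t - l)" "t - l \<in> {0..e}" using q t by (auto simp: h_def L_def)
      then have "q \<in> seg c z" unfolding seg_def g2_def e_def by auto
      then show ?thesis using segcz by simp
    qed
  qed
  ultimately show ?thesis using cwu cwz by blast
qed

end

context tctx begin

lemma seg_dist:
  assumes x: "x \<in> M" and p: "p \<in> M" and a: "a \<in> seg x p" and b: "b \<in> seg x p"
  shows "d a b = \<bar>d x a - d x b\<bar>"
proof -
  have "a = geo x p (d x a)" "d x a \<in> {0..d x p}" using seg_param[OF x p a] by auto
  moreover have "b = geo x p (d x b)" "d x b \<in> {0..d x p}" using seg_param[OF x p b] by auto
  ultimately show ?thesis using geo(4)[OF x p] by metis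
qed

lemma seg_depth_unique:
  assumes x: "x \<in> M" and p: "p \<in> M" and a: "a \<in> seg x p" and b: "b \<in> seg x p"
    and e: "d x a = d x b"
  shows "a = b"
proof -
  have "a \<in> M" "b \<in> M" using a b seg_sub[OF x p] by auto
  then show ?thesis using seg_dist[OF assms(1-4)] e by simp
qed

lemma geo_in_seg: "x \<in> M \<Longrightarrow> p \<in> M \<Longrightarrow> t \<in> {0..d x p} \<Longrightarrow> geo x p t \<in> seg x p"
  by (simp add: seg_def)

lemma seg_mono:
  assumes x: "x \<in> M" and p: "p \<in> M" and c: "c \<in> seg x p"
  shows "seg x c \<subseteq> seg x p"
proof
  fix q assume q: "q \<in> seg x c"
  have cM: "c \<in> M" using c seg_sub[OF x p] by auto
  have "c \<in> seg p x" using c seg_sym[OF x p] by simp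
  moreover have "q \<in> seg c x" using q seg_sym[OF x cM] by simp
  ultimately have "q \<in> seg p x" using seg_trans[OF p x] by blast
  then show "q \<in> seg x p" using seg_sym[OF x p] by simp
qed

definition gp :: "'a \<Rightarrow> 'a \<Rightarrow> 'a \<Rightarrow> real" where
  "gp x p q = (d x p + d x q - d p q) / 2"

lemma gp_sym: "gp x p q = gp x q p"
  by (simp add: gp_def mdist_commute add.commute)

lemma gp_self: "x \<in> M \<Longrightarrow> p \<in> M \<Longrightarrow> gp x p p = d x p"
  by (simp add: gp_def)

lemma gp_le: "x \<in> M \<Longrightarrow> p \<in> M \<Longrightarrow> q \<in> M \<Longrightarrow> gp x p q \<le> d x p"
  unfolding gp_def using mdist_triangle[of x m p q] by simp

lemma gp_ge0: "x \<in> M \<Longrightarrow> p \<in> M \<Longrightarrow> q \<in> M \<Longrightarrow> 0 \<le> gp x p q"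
  unfolding gp_def using mdist_triangle[of p m x q] mdist_commute[of m p x] by simp

lemma median:
  assumes x: "x \<in> M" and p: "p \<in> M" and q: "q \<in> M"
  shows "\<exists>c. c \<in> seg x p \<and> c \<in> seg x q \<and> c \<in> seg p q \<and> d x c = gp x p q"
proof -
  obtain c where c: "c \<in> seg x p" "c \<in> seg x q" "c \<in> seg p q"
    using tripod[OF p x q] by blast
  have "d x c + d c p = d x p" "d x c + d c q = d x q" "d p c + d c q = d p q"
    using seg_imp[OF x p c(1)] seg_imp[OF x q c(2)] seg_imp[OF p q c(3)] by auto
  then have "d x c = gp x p q" by (simp add: gp_def mdist_commute)
  then show ?thesis using c by blast
qed

lemma common_pt:
  assumes x: "x \<in> M" and p: "p \<in> M" and q: "q \<in> M" and t: "0 \<le> t" "t \<le> gp x p q"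
  shows "geo x p t = geo x q t"
proof -
  obtain c where c: "c \<in> seg x p" "c \<in> seg x q" "d x c = gp x p q" using median[OF x p q] by blast
  have cM: "c \<in> M" using c seg_sub[OF x p] by auto
  have tc: "t \<in> {0..d x c}" using t c by simp
  have g: "geo x c t \<in> seg x c" by (rule geo_in_seg[OF x cM tc])
  have dg: "d x (geo x c t) = t" using geo_dist0[OF x cM tc] .
  have tp: "t \<in> {0..d x p}" using t gp_le[OF x p q] by simp
  have tq: "t \<in> {0..d x q}" using t gp_le[OF x q p] gp_sym[of x p q] by simp
  have "geo x c t = geo x p t"
    by (rule seg_depth_unique[OF x p]) (use seg_mono[OF x p c(1)] g geo_in_seg[OF x p tp] dg geo_dist0[OF x p tp] in auto)
  moreover have "geo x c t = geo x q t"
    by (rule seg_depth_unique[OF x q]) (use seg_mono[OF x q c(2)] g geo_in_seg[OF x q tq] dg geo_dist0[OF x q tq] in auto)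
  ultimately show ?thesis by simp
qed

lemma distinct_pt:
  assumes x: "x \<in> M" and p: "p \<in> M" and q: "q \<in> M" and t: "gp x p q < t" "t \<le> d x p" "t \<le> d x q"
  shows "geo x p t \<noteq> geo x q t"
proof
  assume e: "geo x p t = geo x q t"
  have t0: "0 \<le> t" using t gp_ge0[OF x p q] by simp
  have tp: "t \<in> {0..d x p}" and tq: "t \<in> {0..d x q}" using t0 t by auto
  have yM: "geo x p t \<in> M" using geoM[OF x p tp] .
  have "d p q \<le> d p (geo x p t) + d (geo x p t) q" using yM p q by (simp add: mdist_triangle)
  also have "\<dots> = (d x p - t) + (d x q - t)"
    using geo_dist1[OF x p tp] geo_dist1[OF x q tq] e by (simp add: mdist_commute)
  finally show False using t(1) by (simp add: gp_def)
qed

lemma gp_ge_iff: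
  assumes x: "x \<in> M" and p: "p \<in> M" and q: "q \<in> M" and t: "0 \<le> t" "t \<le> d x p" "t \<le> d x q"
  shows "t \<le> gp x p q \<longleftrightarrow> geo x p t = geo x q t"
  using common_pt[OF x p q t(1)] distinct_pt[OF x p q _ t(2,3)] by force

lemma ultra:
  assumes x: "x \<in> M" and p: "p \<in> M" and q: "q \<in> M" and r: "r \<in> M"
  shows "min (gp x p q) (gp x q r) \<le> gp x p r"
proof -
  define t where "t = min (gp x p q) (gp x q r)"
  have t0: "0 \<le> t" using gp_ge0[OF x p q] gp_ge0[OF x q r] by (simp add: t_def)
  have tp: "t \<le> d x p" using gp_le[OF x p q] by (simp add: t_def)
  have tr: "t \<le> d x r" using gp_le[OF x r q] gp_sym[of x q r] by (simp add: t_def)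
  have "geo x p t = geo x q t" using common_pt[OF x p q t0] by (simp add: t_def)
  also have "\<dots> = geo x r t" using common_pt[OF x q r t0] by (simp add: t_def)
  finally show ?thesis using gp_ge_iff[OF x p r t0 tp tr] by (simp add: t_def)
qed

lemma gp_seg: "x \<in> M \<Longrightarrow> p \<in> M \<Longrightarrow> z \<in> M \<Longrightarrow> p \<in> seg x z \<Longrightarrow> gp x p z = d x p"
  using seg_imp[of x z p] by (simp add: gp_def)

lemma seg_w:
  assumes x: "x \<in> M" and w: "w \<in> M" and p: "p \<in> M" and c: "c \<in> seg x p" and g: "gp x w p \<le> d x c"
  shows "c \<in> seg w p"
proof -
  obtain mm where mm: "mm \<in> seg x p" "mm \<in> seg w p" "d x mm = gp x w p"
    using median[OF x w p] by blast
  have cM: "c \<in> M" and mM: "mm \<in> M" using c mm seg_sub[OF x p] by auto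
  have dmc: "d mm c = d x c - d x mm" using seg_dist[OF x p mm(1) c] g mm(3) by simp
  have dcp: "d c p = d x p - d x c" using seg_imp[OF x p c] by simp
  have dmp: "d mm p = d x p - d x mm" using seg_imp[OF x p mm(1)] by simp
  have dwp: "d w mm + d mm p = d w p" using seg_imp[OF w p mm(2)] .
  have "d w c \<le> d w mm + d mm c" using w mM cM by (simp add: mdist_triangle)
  then have "d w c + d c p \<le> d w p" using dmc dcp dmp dwp by simp
  moreover have "d w p \<le> d w c + d c p" using w cM p by (simp add: mdist_triangle)
  ultimately show ?thesis using betw_seg[OF w p cM] by simp
qed

end

lemma third_ge:
  fixes f :: "'b \<Rightarrow> real"
  assumes fin: "finite B" and S: "S1 \<in> B" "S2 \<in> B" "S3 \<in> B" and dst: "S1 \<noteq> S2" "S1 \<noteq> S3" "S2 \<noteq> S3"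
    and h: "h \<le> f S1" "h \<le> f S2" "h \<le> f S3"
  shows "h \<le> rev (sorted_list_of_multiset (image_mset f (mset_set B))) ! 2"
proof (rule ccontr)
  assume neg: "\<not> ?thesis"
  define A where "A = image_mset f (mset_set B)"
  define xs where "xs = sorted_list_of_multiset A"
  define n where "n = length xs"
  have sxs: "sorted xs" by (simp add: xs_def)
  have mxs: "mset xs = A" by (simp add: xs_def)
  have "{S1, S2, S3} \<subseteq> {b \<in> B. h \<le> f b}" using S h by auto
  moreover have "card {S1, S2, S3} = 3" using dst by auto
  moreover have "finite {b \<in> B. h \<le> f b}" using fin by simp
  ultimately have c3: "3 \<le> card {b \<in> B. h \<le> f b}"
    using card_mono by metis
  have "filter_mset (\<lambda>v. h \<le> v) A = image_mset f (filter_mset (\<lambda>b. h \<le> f b) (mset_set B))"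
    by (simp add: A_def filter_mset_image_mset)
  also have "filter_mset (\<lambda>b. h \<le> f b) (mset_set B) = mset_set {b \<in> B. h \<le> f b}"
    using fin by (simp add: filter_mset_mset_set)
  finally have "size (filter_mset (\<lambda>v. h \<le> v) A) = card {b \<in> B. h \<le> f b}" by simp
  moreover have "size (filter_mset (\<lambda>v. h \<le> v) (mset xs)) = length (filter (\<lambda>v. h \<le> v) xs)"
    by (simp only: mset_filter[symmetric] size_mset)
  ultimately have c3': "3 \<le> length (filter (\<lambda>v. h \<le> v) xs)"
    using c3 mxs by simp
  then have n3: "3 \<le> n" using length_filter_le[of "\<lambda>v. h \<le> v" xs] unfolding n_def by linarith
  have r: "rev xs ! 2 = xs ! (n - 3)" using n3 by (simp add: rev_nth n_def numeral_eq_Suc)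
  have lt: "xs ! (n - 3) < h" using neg r by (simp add: xs_def A_def)
  have small: "xs ! i < h" if "i \<le> n - 3" for i
  proof -
    have "n - 3 < length xs" using n3 by (simp add: n_def)
    then have "xs ! i \<le> xs ! (n - 3)" using sorted_nth_mono[OF sxs that] by simp
    then show ?thesis using lt by simp
  qed
  have "filter (\<lambda>v. h \<le> v) (take (n - 2) xs) = []"
  proof -
    have "\<forall>v\<in>set (take (n - 2) xs). \<not> h \<le> v"
    proof
      fix v assume "v \<in> set (take (n - 2) xs)"
      then obtain i where "i < length (take (n-2) xs)" "v = take (n-2) xs ! i" by (auto simp: in_set_conv_nth)
      then have "i \<le> n - 3" "v = xs ! i" using n3 by auto
      then show "\<not> h \<le> v" using small by force
    qed
    then show ?thesis by (simp add: filter_empty_conv)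
  qed
  moreover have "filter (\<lambda>v. h \<le> v) xs = filter (\<lambda>v. h \<le> v) (take (n - 2) xs) @ filter (\<lambda>v. h \<le> v) (drop (n - 2) xs)"
    by (simp only: filter_append[symmetric] append_take_drop_id)
  ultimately have "filter (\<lambda>v. h \<le> v) xs = filter (\<lambda>v. h \<le> v) (drop (n - 2) xs)"
    by simp
  moreover have "length (filter (\<lambda>v. h \<le> v) (drop (n - 2) xs)) \<le> 2"
    using length_filter_le[of _ "drop (n - 2) xs"] n3 by (simp add: n_def)
  ultimately show False using c3' by simp
qed

context tctx begin

lemma Mbound: "\<exists>B. \<forall>a\<in>M. \<forall>b\<in>M. d a b \<le> B"
proof -
  have "compact_space MS.mtopology" using tree by (simp add: metric_tree_def mtop)
  then have "compactin MS.mtopology M" by (simp add: compact_space_def)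
  then have "MS.mbounded M" by (rule MS.compactin_imp_mbounded)
  then show ?thesis by (simp add: MS.mbounded_alt)
qed

abbreviation XX :: "'a \<Rightarrow> 'a topology" where
  "XX c \<equiv> subtopology (mtopology_of m) (M - {c})"

lemma topspace_XX: "topspace (XX c) = M - {c}"
  by auto

lemma seg_near:
  assumes z: "z \<in> M" and z': "z' \<in> M" and q: "q \<in> seg z z'"
  shows "d z q \<le> d z z'"
  using seg_imp[OF z z' q] by (smt (verit) mdist_nonneg)

lemma sep:
  assumes c: "c \<in> M" and u: "u \<in> M" and v: "v \<in> M" and uc: "u \<noteq> c" and vc: "v \<noteq> c"
    and cuv: "c \<in> seg u v"
  shows "\<not> connected_component_of (XX c) u v"
proof
  assume "connected_component_of (XX c) u v"
  then obtain T where T: "connectedin (XX c) T" "u \<in> T" "v \<in> T"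
    unfolding connected_component_of_def by blast
  have "connectedin MS.mtopology T \<and> T \<subseteq> M - {c}"
    using T(1) connectedin_subtopology[of MS.mtopology "M - {c}" T] mtop by simp
  then have Tc: "connectedin MS.mtopology T" and Tsub: "T \<subseteq> M - {c}" by auto
  define U where "U = {z \<in> M - {c}. c \<notin> seg u z}"
  define V where "V = {z \<in> M - {c}. c \<in> seg u z}"
  have oU: "openin MS.mtopology U"
    unfolding MS.openin_mtopology
  proof (intro conjI allI impI)
    show "U \<subseteq> M" by (auto simp: U_def)
    fix z assume zU: "z \<in> U"
    then have z: "z \<in> M" and zc: "z \<noteq> c" and ns: "c \<notin> seg u z" by (auto simp: U_def)
    have "0 < d z c" using z c zc by simp
    moreover have "MS.mball z (d z c) \<subseteq> U"
    proof
      fix z' assume "z' \<in> MS.mball z (d z c)"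
      then have z': "z' \<in> M" and dz: "d z z' < d z c" by auto
      have z'c: "z' \<noteq> c" using dz by auto
      obtain cc where "seg u z' \<subseteq> seg z u \<union> seg z z'" using tripod[OF u z z'] by blast
      moreover have "c \<notin> seg z u" using ns seg_sym[OF u z] by simp
      moreover have "c \<notin> seg z z'" using seg_near[OF z z'] dz by force
      ultimately have "c \<notin> seg u z'" by blast
      then show "z' \<in> U" using z' z'c by (simp add: U_def)
    qed
    ultimately show "\<exists>r>0. MS.mball z r \<subseteq> U" by blast
  qed
  have oV: "openin MS.mtopology V"
    unfolding MS.openin_mtopology
  proof (intro conjI allI impI)
    show "V \<subseteq> M" by (auto simp: V_def)
    fix z assume zV: "z \<in> V"
    then have z: "z \<in> M" and zc: "z \<noteq> c" and ns: "c \<in> seg u z" by (auto simp: V_def)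
    have "0 < d z c" using z c zc by simp
    moreover have "MS.mball z (d z c) \<subseteq> V"
    proof
      fix z' assume "z' \<in> MS.mball z (d z c)"
      then have z': "z' \<in> M" and dz: "d z z' < d z c" by auto
      have z'c: "z' \<noteq> c" using dz by auto
      obtain cc where "seg u z \<subseteq> seg z' u \<union> seg z' z" using tripod[OF u z' z] by blast
      moreover have "c \<notin> seg z' z"
      proof
        assume "c \<in> seg z' z"
        then have "c \<in> seg z z'" using seg_sym[OF z z'] by simp
        then show False using seg_near[OF z z'] dz by force
      qed
      ultimately have "c \<in> seg z' u" using ns by blast
      then have "c \<in> seg u z'" using seg_sym[OF u z'] by simp
      then show "z' \<in> V" using z' z'c by (simp add: V_def)
    qed
    ultimately show "\<exists>r>0. MS.mball z r \<subseteq> V" by blast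
  qed
  have "u \<in> U" using u uc seg_same[OF u] by (simp add: U_def)
  moreover have "v \<in> V" using v vc cuv by (simp add: V_def)
  moreover have "T \<subseteq> U \<union> V" using Tsub by (auto simp: U_def V_def)
  moreover have "U \<inter> V \<inter> T = {}" by (auto simp: U_def V_def)
  ultimately show False using connectedinD[OF Tc oU oV] T by blast
qed

lemma seg_connected:
  assumes u: "u \<in> M" and v: "v \<in> M"
  shows "connectedin MS.mtopology (seg u v)"
proof (cases "u = v")
  case True
  then show ?thesis using seg_same[OF u] u by simp
next
  case False
  then have L: "0 < d u v" using u v by simp
  have "pathin (mtopology_of m) (\<lambda>t. geo u v (d u v * t))"
    by (rule lip_cont[OF L]) (use geoM[OF u v] geo(4)[OF u v] in auto)
  then have "connectedin (mtopology_of m) ((\<lambda>t. geo u v (d u v * t)) ` {0..1})"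
    by (rule connectedin_path_image)
  moreover have "(\<lambda>t. geo u v (d u v * t)) ` {0..1} = seg u v"
    using scale_img[OF L, of "geo u v"] by (simp add: seg_def)
  ultimately show ?thesis by (simp add: mtop)
qed

lemma same_comp:
  assumes c: "c \<in> M" and u: "u \<in> M" and v: "v \<in> M" and ns: "c \<notin> seg u v"
  shows "connected_component_of (XX c) u v"
  unfolding connected_component_of_def
proof (intro exI conjI)
  show "connectedin (XX c) (seg u v)"
    using seg_connected[OF u v] seg_sub[OF u v] ns by (auto simp: connectedin_subtopology mtop)
  show "u \<in> seg u v" "v \<in> seg u v" using seg_end1[OF u v] seg_end2[OF u v] by auto
qed

definition comp :: "'a \<Rightarrow> 'a \<Rightarrow> 'a set" where
  "comp c u = connected_component_of_set (XX c) u"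

lemma comp_branch: "u \<in> M \<Longrightarrow> u \<noteq> c \<Longrightarrow> comp c u \<in> branches m c"
  unfolding comp_def branches_def
  by (simp add: connected_component_in_connected_components_of)

lemma comp_ne:
  assumes c: "c \<in> M" and u: "u \<in> M" and v: "v \<in> M" and uc: "u \<noteq> c" and vc: "v \<noteq> c"
    and cuv: "c \<in> seg u v"
  shows "comp c u \<noteq> comp c v"
proof
  assume e: "comp c u = comp c v"
  have "connected_component_of (XX c) v v" using v vc by (simp add: connected_component_of_refl)
  then have "v \<in> comp c u" using e by (simp add: comp_def)
  then show False using sep[OF assms] by (simp add: comp_def)
qed

lemma comp_diam:
  assumes c: "c \<in> M" and u: "u \<in> M" and r0: "0 \<le> r" and r: "r < d u c"
  shows "r \<le> mdiam m (comp c u)"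
proof -
  have uc: "u \<noteq> c" using r r0 u by auto
  have rr: "r \<in> {0..d u c}" using r r0 by simp
  define p where "p = geo u c r"
  have pM: "p \<in> M" using geoM[OF u c rr] by (simp add: p_def)
  have dup: "d u p = r" using geo_dist0[OF u c rr] by (simp add: p_def)
  have "c \<notin> seg u p"
  proof
    assume "c \<in> seg u p"
    then have "d u c \<le> d u p" using seg_near[OF u pM] by blast
    then show False using dup r by simp
  qed
  then have "connected_component_of (XX c) u p" by (rule same_comp[OF c u pM])
  then have pin: "p \<in> comp c u" by (simp add: comp_def)
  have uin: "u \<in> comp c u" using u uc by (simp add: comp_def connected_component_of_refl)
  have sub: "comp c u \<subseteq> M" unfolding comp_def
    using connected_component_in_topspace by fastforce
  obtain B where B: "\<forall>a\<in>M. \<forall>b\<in>M. d a b \<le> B" using Mbound by blast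
  define DS where "DS = {d a b | a b. a \<in> comp c u \<and> b \<in> comp c u}"
  have bdd: "bdd_above DS"
    using B sub unfolding DS_def by (auto intro!: bdd_aboveI[of _ B])
  have mem: "d u p \<in> DS" using uin pin unfolding DS_def by blast
  have "d u p \<le> Sup DS" by (rule cSup_upper[OF mem bdd])
  then have "d u p \<le> mdiam m (comp c u)" unfolding mdiam_def DS_def .
  then show ?thesis using dup by simp
qed

lemma good_node:
  assumes val: "valence_le m N" and c: "c \<in> M"
    and u: "u1 \<in> M" "u2 \<in> M" "u3 \<in> M"
    and s: "c \<in> seg u1 u2" "c \<in> seg u1 u3" "c \<in> seg u2 u3"
    and r0: "0 \<le> r" and r: "r < d u1 c" "r < d u2 c" "r < d u3 c"
  shows "branch_point m c \<and> r \<le> Hbr m c"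
proof -
  have uc: "u1 \<noteq> c" "u2 \<noteq> c" "u3 \<noteq> c" using r r0 c by auto
  have fin: "finite (branches m c)" and cardN: "card (branches m c) \<le> N"
    using val c by (auto simp: valence_le_def)
  have B: "comp c u1 \<in> branches m c" "comp c u2 \<in> branches m c" "comp c u3 \<in> branches m c"
    using comp_branch u uc by auto
  have ne: "comp c u1 \<noteq> comp c u2" "comp c u1 \<noteq> comp c u3" "comp c u2 \<noteq> comp c u3"
    using comp_ne[OF c] u uc s by auto
  have dm: "r \<le> mdiam m (comp c u1)" "r \<le> mdiam m (comp c u2)" "r \<le> mdiam m (comp c u3)"
    using comp_diam[OF c _ r0] u r by auto
  have "r \<le> Hbr m c" unfolding Hbr_def by (rule third_ge[OF fin B ne dm])
  moreover have "3 \<le> card (branches m c)"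
  proof -
    have "card {comp c u1, comp c u2, comp c u3} = 3" using ne by auto
    moreover have "{comp c u1, comp c u2, comp c u3} \<subseteq> branches m c" using B by auto
    ultimately show ?thesis using card_mono[OF fin] by metis
  qed
  ultimately show ?thesis using c by (simp add: branch_point_def)
qed

end

lemma card_factor:
  assumes fin: "finite F" and fg: "\<And>p q. p \<in> F \<Longrightarrow> q \<in> F \<Longrightarrow> f p = f q \<Longrightarrow> g p = g q"
  shows "card (g ` F) \<le> card (f ` F)"
proof -
  define h where "h y = g (SOME p. p \<in> F \<and> f p = y)" for y
  have "g ` F = h ` (f ` F)"
  proof (intro equalityI subsetI)
    fix y assume "y \<in> g ` F"
    then obtain p where p: "p \<in> F" "y = g p" by blast
    have "\<exists>p'. p' \<in> F \<and> f p' = f p" using p by blast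
    then have "(SOME p'. p' \<in> F \<and> f p' = f p) \<in> F \<and> f (SOME p'. p' \<in> F \<and> f p' = f p) = f p"
      by (rule someI_ex)
    then have "h (f p) = g p" unfolding h_def using fg p(1) by metis
    then show "y \<in> h ` (f ` F)" using p by (metis image_eqI)
  next
    fix y assume "y \<in> h ` (f ` F)"
    then obtain p where p: "p \<in> F" "y = h (f p)" by blast
    have "\<exists>p'. p' \<in> F \<and> f p' = f p" using p by blast
    then have "(SOME p'. p' \<in> F \<and> f p' = f p) \<in> F"
      using someI_ex[of "\<lambda>p'. p' \<in> F \<and> f p' = f p"] by blast
    then show "y \<in> g ` F" using p by (simp add: h_def)
  qed
  then show ?thesis using card_image_le fin by (metis finite_imageI)
qed

context tctx begin

definition Pset :: "'a \<Rightarrow> real \<Rightarrow> real \<Rightarrow> 'a set" where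
  "Pset x \<rho> s = {p \<in> M. d x p = s \<and> (\<exists>z\<in>M. p \<in> seg x z \<and> s + \<rho> \<le> d x z)}"

definition tau :: "'a \<Rightarrow> 'a set \<Rightarrow> real" where
  "tau x F = Min {gp x p q | p q. p \<in> F \<and> q \<in> F \<and> p \<noteq> q}"

definition node :: "'a \<Rightarrow> 'a set \<Rightarrow> 'a" where
  "node x F = geo x (SOME p. p \<in> F) (tau x F)"

definition cls :: "'a \<Rightarrow> 'a set \<Rightarrow> 'a \<Rightarrow> 'a set" where
  "cls x F p = {q \<in> F. tau x F < gp x p q}"

lemma two_elems: "finite F \<Longrightarrow> 2 \<le> card F \<Longrightarrow> \<exists>p q. p \<in> F \<and> q \<in> F \<and> p \<noteq> q"
  by (metis One_nat_def card_le_Suc0_iff_eq not_less_eq_eq numeral_2_eq_2)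

context
  fixes x \<rho> s F
  assumes x: "x \<in> M" and rho: "0 < \<rho>" and s0: "0 \<le> s"
    and fin: "finite F" and FP: "F \<subseteq> Pset x \<rho> s" and F2: "2 \<le> card F"
begin

lemma FM: "p \<in> F \<Longrightarrow> p \<in> M" using FP by (auto simp: Pset_def)
lemma Fd: "p \<in> F \<Longrightarrow> d x p = s" using FP by (auto simp: Pset_def)
lemma Fz: "p \<in> F \<Longrightarrow> \<exists>z\<in>M. p \<in> seg x z \<and> s + \<rho> \<le> d x z" using FP by (auto simp: Pset_def)

lemma pairs_fin: "finite {gp x p q | p q. p \<in> F \<and> q \<in> F \<and> p \<noteq> q}"
proof -
  have "{gp x p q | p q. p \<in> F \<and> q \<in> F \<and> p \<noteq> q} \<subseteq> (\<lambda>(p,q). gp x p q) ` (F \<times> F)" by auto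
  then show ?thesis using fin by (meson finite_SigmaI finite_imageI finite_subset)
qed

lemma pairs_ne: "{gp x p q | p q. p \<in> F \<and> q \<in> F \<and> p \<noteq> q} \<noteq> {}"
  using two_elems[OF fin F2] by blast

lemma tau_le: "p \<in> F \<Longrightarrow> q \<in> F \<Longrightarrow> p \<noteq> q \<Longrightarrow> tau x F \<le> gp x p q"
  unfolding tau_def using pairs_fin by (intro Min_le) auto

lemma tau_att: "\<exists>p q. p \<in> F \<and> q \<in> F \<and> p \<noteq> q \<and> gp x p q = tau x F"
proof -
  have "tau x F \<in> {gp x p q | p q. p \<in> F \<and> q \<in> F \<and> p \<noteq> q}"
    unfolding tau_def using pairs_fin pairs_ne by (rule Min_in)
  then obtain p q where "tau x F = gp x p q" "p \<in> F" "q \<in> F" "p \<noteq> q" by blast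
  then show ?thesis by metis
qed

lemma gp_lt_s: "p \<in> F \<Longrightarrow> q \<in> F \<Longrightarrow> p \<noteq> q \<Longrightarrow> gp x p q < s"
proof (rule ccontr)
  assume p: "p \<in> F" and q: "q \<in> F" and pq: "p \<noteq> q" and "\<not> gp x p q < s"
  then have "s \<le> gp x p q" by simp
  then have "geo x p s = geo x q s" using common_pt[OF x FM[OF p] FM[OF q] s0] by simp
  then show False using geo(3)[OF x FM[OF p]] geo(3)[OF x FM[OF q]] Fd[OF p] Fd[OF q] pq by simp
qed

lemma tau_lt: "tau x F < s"
  using tau_att gp_lt_s by force

lemma tau_ge0: "0 \<le> tau x F"
  using tau_att gp_ge0[OF x] FM by force

lemma gp_self_s: "p \<in> F \<Longrightarrow> gp x p p = s"
  using gp_self[OF x FM] Fd by simp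

lemma node_props: "p \<in> F \<Longrightarrow> node x F = geo x p (tau x F) \<and> node x F \<in> seg x p \<and> d x (node x F) = tau x F"
proof -
  assume p: "p \<in> F"
  define p0 where "p0 = (SOME p. p \<in> F)"
  have p0: "p0 \<in> F" unfolding p0_def using p by (rule someI)
  have "tau x F \<le> gp x p0 p"
  proof (cases "p0 = p")
    case True then show ?thesis using gp_self_s[OF p] tau_lt by simp
  next
    case False then show ?thesis using tau_le[OF p0 p] by simp
  qed
  then have "geo x p0 (tau x F) = geo x p (tau x F)" using common_pt[OF x FM[OF p0] FM[OF p] tau_ge0] by simp
  moreover have tt: "tau x F \<in> {0..d x p}" using tau_ge0 tau_lt Fd[OF p] by simp
  ultimately show ?thesis
    using geo_in_seg[OF x FM[OF p] tt] geo_dist0[OF x FM[OF p] tt] by (simp add: node_def p0_def)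
qed

lemma nodeM: "node x F \<in> M"
  using two_elems[OF fin F2] node_props seg_sub[OF x] FM by blast

lemma node_seg: "p \<in> F \<Longrightarrow> q \<in> F \<Longrightarrow> gp x p q \<le> tau x F \<Longrightarrow> node x F \<in> seg p q"
proof -
  assume p: "p \<in> F" and q: "q \<in> F" and g: "gp x p q \<le> tau x F"
  have "node x F \<in> seg q p"
    by (rule seg_w[OF x FM[OF q] FM[OF p]]) (use node_props[OF p] g gp_sym[of x p q] in auto)
  then show ?thesis using seg_sym FM p q by blast
qed

lemma node_ne: "p \<in> F \<Longrightarrow> p \<noteq> node x F"
  using node_props Fd tau_lt by force

lemma ext_props: "p \<in> F \<Longrightarrow> z \<in> M \<Longrightarrow> p \<in> seg x z \<Longrightarrow> s + \<rho> \<le> d x z \<Longrightarrow>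
   gp x p z = s \<and> node x F \<in> seg x z \<and> \<rho> < d z (node x F)"
proof -
  assume p: "p \<in> F" and z: "z \<in> M" and pz: "p \<in> seg x z" and dz: "s + \<rho> \<le> d x z"
  have g: "gp x p z = s" using gp_seg[OF x FM[OF p] z pz] Fd[OF p] by simp
  have ns: "node x F \<in> seg x z" using seg_mono[OF x z pz] node_props[OF p] by blast
  have "d x (node x F) + d (node x F) z = d x z" using seg_imp[OF x z ns] .
  moreover have "d x (node x F) = tau x F" using node_props[OF p] by blast
  ultimately have "d (node x F) z = d x z - tau x F" by linarith
  then have "d z (node x F) = d x z - tau x F" by (simp add: mdist_commute)
  then show ?thesis using g ns dz tau_lt by simp
qed

lemma good:
  assumes val: "valence_le m N" and w: "w \<in> M" and wg: "\<And>p. p \<in> F \<Longrightarrow> gp x w p \<le> tau x F"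
    and wd: "\<rho> < d w (node x F)"
  shows "branch_point m (node x F) \<and> \<rho> \<le> Hbr m (node x F)"
proof -
  obtain p1 p2 where p: "p1 \<in> F" "p2 \<in> F" "p1 \<noteq> p2" "gp x p1 p2 = tau x F" using tau_att by blast
  obtain z1 where z1: "z1 \<in> M" "p1 \<in> seg x z1" "s + \<rho> \<le> d x z1" using Fz[OF p(1)] by blast
  obtain z2 where z2: "z2 \<in> M" "p2 \<in> seg x z2" "s + \<rho> \<le> d x z2" using Fz[OF p(2)] by blast
  note e1 = ext_props[OF p(1) z1] and e2 = ext_props[OF p(2) z2]
  let ?c = "node x F"
  have p1M: "p1 \<in> M" and p2M: "p2 \<in> M" using FM p by auto
  have g1: "gp x w z1 \<le> tau x F"
  proof (rule ccontr)
    assume "\<not> ?thesis"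
    then have "tau x F < min (gp x w z1) (gp x z1 p1)" using e1 tau_lt gp_sym[of x p1 z1] by simp
    then show False using ultra[OF x w z1(1) p1M] wg[OF p(1)] by (simp add: min_def split: if_splits)
  qed
  have g2: "gp x w z2 \<le> tau x F"
  proof (rule ccontr)
    assume "\<not> ?thesis"
    then have "tau x F < min (gp x w z2) (gp x z2 p2)" using e2 tau_lt gp_sym[of x p2 z2] by simp
    then show False using ultra[OF x w z2(1) p2M] wg[OF p(2)] by (simp add: min_def split: if_splits)
  qed
  have g3: "gp x z1 p2 \<le> tau x F"
  proof (rule ccontr)
    assume "\<not> ?thesis"
    then have "tau x F < min (gp x p1 z1) (gp x z1 p2)" using e1 tau_lt by simp
    then show False using ultra[OF x p1M z1(1) p2M] p(4) by (simp add: min_def split: if_splits)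
  qed
  have g4: "gp x z1 z2 \<le> tau x F"
  proof (rule ccontr)
    assume "\<not> ?thesis"
    then have "tau x F < min (gp x z1 z2) (gp x z2 p2)" using e2 tau_lt gp_sym[of x p2 z2] by simp
    then show False using ultra[OF x z1(1) z2(1) p2M] g3 by (simp add: min_def split: if_splits)
  qed
  have d1: "d x ?c = tau x F" using node_props[OF p(1)] by blast
  have s1: "?c \<in> seg w z1" by (rule seg_w[OF x w z1(1)]) (use e1 g1 d1 in auto)
  have s2: "?c \<in> seg w z2" by (rule seg_w[OF x w z2(1)]) (use e2 g2 d1 in auto)
  have s3: "?c \<in> seg z1 z2" by (rule seg_w[OF x z1(1) z2(1)]) (use e2 g4 d1 in auto)
  show ?thesis
    by (rule good_node[OF val nodeM w z1(1) z2(1) s1 s2 s3]) (use rho wd e1 e2 in \<open>auto simp: mdist_commute\<close>)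
qed

lemma cls_sub: "cls x F p \<subseteq> F" by (auto simp: cls_def)

lemma cls_self: "p \<in> F \<Longrightarrow> p \<in> cls x F p"
  using gp_self_s tau_lt by (simp add: cls_def)

lemma cls_eq: "p \<in> F \<Longrightarrow> q \<in> cls x F p \<Longrightarrow> cls x F q = cls x F p"
proof -
  assume p: "p \<in> F" and q: "q \<in> cls x F p"
  have qF: "q \<in> F" and g: "tau x F < gp x p q" using q by (auto simp: cls_def)
  show ?thesis
  proof (intro equalityI subsetI)
    fix r assume "r \<in> cls x F q"
    then have rF: "r \<in> F" and gr: "tau x F < gp x q r" by (auto simp: cls_def)
    have "min (gp x p q) (gp x q r) \<le> gp x p r" using ultra[OF x FM[OF p] FM[OF qF] FM[OF rF]] .
    then show "r \<in> cls x F p" using g gr rF by (simp add: cls_def)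
  next
    fix r assume "r \<in> cls x F p"
    then have rF: "r \<in> F" and gr: "tau x F < gp x p r" by (auto simp: cls_def)
    have "min (gp x q p) (gp x p r) \<le> gp x q r" using ultra[OF x FM[OF qF] FM[OF p] FM[OF rF]] .
    then show "r \<in> cls x F q" using g gr rF gp_sym[of x p q] by (simp add: cls_def)
  qed
qed

lemma cls_count:
  assumes val: "valence_le m N"
  shows "card (cls x F ` F) \<le> N"
proof -
  let ?c = "node x F"
  have "card (cls x F ` F) \<le> card (comp ?c ` F)"
  proof (rule card_factor[OF fin])
    fix p q assume p: "p \<in> F" and q: "q \<in> F" and e: "comp ?c p = comp ?c q"
    show "cls x F p = cls x F q"
    proof (rule ccontr)
      assume ne: "cls x F p \<noteq> cls x F q"
      have "\<not> tau x F < gp x p q"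
      proof
        assume "tau x F < gp x p q"
        then have "q \<in> cls x F p" using q by (simp add: cls_def)
        then show False using cls_eq[OF p] ne by simp
      qed
      then have "?c \<in> seg p q" using node_seg[OF p q] by simp
      then show False using comp_ne[OF nodeM FM[OF p] FM[OF q] node_ne[OF p] node_ne[OF q]] e by simp
    qed
  qed
  also have "\<dots> \<le> card (branches m ?c)"
  proof (rule card_mono)
    show "finite (branches m ?c)" using val nodeM by (simp add: valence_le_def)
    show "comp ?c ` F \<subseteq> branches m ?c" using comp_branch FM node_ne by blast
  qed
  also have "\<dots> \<le> N" using val nodeM by (simp add: valence_le_def)
  finally show ?thesis .
qed

lemma cls_union: "F = \<Union> (cls x F ` F)"
  using cls_sub cls_self by blast

end

end

context tctx begin

lemma cls_step:
  assumes x: "x \<in> M" and rho: "0 < \<rho>" and s0: "0 \<le> s"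
    and fin: "finite F" and FP: "F \<subseteq> Pset x \<rho> s" and F2: "2 \<le> card F"
    and p0: "p0 \<in> F" and A: "A = cls x F p0" and A2: "2 \<le> card A"
  shows "finite A \<and> A \<subseteq> Pset x \<rho> s \<and> tau x F < tau x A
     \<and> d (node x F) (node x A) = tau x A - tau x F
     \<and> (\<exists>w\<in>M. (\<forall>p\<in>A. gp x w p \<le> tau x A) \<and> \<rho> < d w (node x A))"
proof -
  note ctx = x rho s0 fin FP F2
  have AF: "A \<subseteq> F" using cls_sub[OF ctx] A by simp
  have finA: "finite A" using AF fin finite_subset by blast
  have AP: "A \<subseteq> Pset x \<rho> s" using AF FP by blast
  note ctxA = x rho s0 finA AP A2
  have p0M: "p0 \<in> M" using FM[OF ctx p0] .
  obtain q q' where qq: "q \<in> A" "q' \<in> A" "q \<noteq> q'" "gp x q q' = tau x A" using tau_att[OF ctxA] by blast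
  have qF: "q \<in> F" "q' \<in> F" using qq AF by auto
  have qM: "q \<in> M" "q' \<in> M" using FM[OF ctx] qF by auto
  have "tau x F < gp x p0 q" "tau x F < gp x p0 q'" using qq A by (auto simp: cls_def)
  moreover have "min (gp x q p0) (gp x p0 q') \<le> gp x q q'" using ultra[OF x qM(1) p0M qM(2)] .
  ultimately have tlt: "tau x F < tau x A" using qq(4) gp_sym[of x q p0] by (simp add: min_def split: if_splits)
  have n1: "node x F \<in> seg x q" "d x (node x F) = tau x F" using node_props[OF ctx qF(1)] by blast+
  have n2: "node x A \<in> seg x q" "d x (node x A) = tau x A" using node_props[OF ctxA qq(1)] by blast+
  have dn: "d (node x F) (node x A) = tau x A - tau x F"
    using seg_dist[OF x qM(1) n1(1) n2(1)] n1(2) n2(2) tlt by simp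
  obtain p1 p2 where pp: "p1 \<in> F" "p2 \<in> F" "p1 \<noteq> p2" "gp x p1 p2 = tau x F" using tau_att[OF ctx] by blast
  have pM: "p1 \<in> M" "p2 \<in> M" using FM[OF ctx] pp by auto
  have "\<not> (p1 \<in> A \<and> p2 \<in> A)"
  proof
    assume "p1 \<in> A \<and> p2 \<in> A"
    then have "tau x F < gp x p0 p1" "tau x F < gp x p0 p2" using A by (auto simp: cls_def)
    moreover have "min (gp x p1 p0) (gp x p0 p2) \<le> gp x p1 p2" using ultra[OF x pM(1) p0M pM(2)] .
    ultimately show False using pp(4) gp_sym[of x p1 p0] by (simp add: min_def split: if_splits)
  qed
  then obtain r where r: "r \<in> F" "r \<notin> A" using pp by blast
  have rM: "r \<in> M" using FM[OF ctx r(1)] .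
  have rg: "\<not> tau x F < gp x p0 r" using r A by (simp add: cls_def)
  obtain z where z: "z \<in> M" "r \<in> seg x z" "s + \<rho> \<le> d x z" using Fz[OF ctx r(1)] by blast
  have grz: "gp x r z = s" using gp_seg[OF x rM z(1) z(2)] Fd[OF ctx r(1)] by simp
  have wg: "gp x z a \<le> tau x A" if a: "a \<in> A" for a
  proof -
    have aF: "a \<in> F" using a AF by auto
    have aM: "a \<in> M" using FM[OF ctx aF] .
    have ga: "tau x F < gp x p0 a" using a A by (simp add: cls_def)
    have "gp x z a \<le> tau x F"
    proof (rule ccontr)
      assume "\<not> ?thesis"
      moreover have "min (gp x r z) (gp x z a) \<le> gp x r a" using ultra[OF x rM z(1) aM] .
      moreover have "min (gp x p0 a) (gp x a r) \<le> gp x p0 r" using ultra[OF x p0M aM rM] .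
      ultimately show False using grz tau_lt[OF ctx] ga rg gp_sym[of x a r]
        by (simp add: min_def split: if_splits)
    qed
    then show ?thesis using tlt by simp
  qed
  have nAM: "node x A \<in> M" using nodeM[OF ctxA] .
  have "d x z \<le> d x (node x A) + d (node x A) z" using x z(1) nAM by (simp add: mdist_triangle)
  then have "\<rho> < d z (node x A)" using z(3) n2(2) tau_lt[OF ctxA] by (simp add: mdist_commute)
  then show ?thesis using finA AP tlt dn wg z(1) by blast
qed

lemma card_sum_bound:
  assumes fin: "finite F" and FU: "F = \<Union> CL" and cCL: "card CL \<le> N" and each: "\<And>A. A \<in> CL \<Longrightarrow> card A \<le> K"
    and finCL: "finite CL"
  shows "card F \<le> N * K"
proof -
  have "card F \<le> sum card CL" using FU card_Union_le_sum_card by metis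
  also have "\<dots> \<le> card CL * K" using sum_bounded_above[of CL card K] each by simp
  also have "\<dots> \<le> N * K" using cCL by simp
  finally show ?thesis .
qed

context
  fixes N :: nat and C :: real
  assumes val: "valence_le m N" and ubs: "uniform_branch_separation m C" and Cp: "0 < C" and N1: "1 \<le> N"
begin

lemma main:
  assumes x: "x \<in> M" and rho: "0 < \<rho>" and s0: "0 \<le> s"
  shows "\<forall>F. finite F \<and> F \<subseteq> Pset x \<rho> s \<and> 2 \<le> card F \<and> s - tau x F \<le> real k * (\<rho> / C) \<and>
     (\<exists>w\<in>M. (\<forall>p\<in>F. gp x w p \<le> tau x F) \<and> \<rho> < d w (node x F)) \<longrightarrow> card F \<le> N ^ k"
proof (induction k)
  case 0
  show ?case
  proof (intro allI impI)
    fix F assume H: "finite F \<and> F \<subseteq> Pset x \<rho> s \<and> 2 \<le> card F \<and> s - tau x F \<le> real 0 * (\<rho> / C) \<and>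
     (\<exists>w\<in>M. (\<forall>p\<in>F. gp x w p \<le> tau x F) \<and> \<rho> < d w (node x F))"
    then have "tau x F < s" using tau_lt[OF x rho s0] by blast
    then show "card F \<le> N ^ 0" using H by simp
  qed
next
  case (Suc k)
  show ?case
  proof (intro allI impI)
    fix F assume H: "finite F \<and> F \<subseteq> Pset x \<rho> s \<and> 2 \<le> card F \<and> s - tau x F \<le> real (Suc k) * (\<rho> / C) \<and>
     (\<exists>w\<in>M. (\<forall>p\<in>F. gp x w p \<le> tau x F) \<and> \<rho> < d w (node x F))"
    then have fin: "finite F" and FP: "F \<subseteq> Pset x \<rho> s" and F2: "2 \<le> card F"
      and sk: "s - tau x F \<le> real (Suc k) * (\<rho> / C)" by auto
    note ctx = x rho s0 fin FP F2
    obtain w where w: "w \<in> M" "\<And>p. p\<in>F \<Longrightarrow> gp x w p \<le> tau x F" "\<rho> < d w (node x F)" using H by blast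
    have gF: "branch_point m (node x F) \<and> \<rho> \<le> Hbr m (node x F)" using good[OF ctx val w] .
    have each: "card A \<le> N ^ k" if A: "A \<in> cls x F ` F" for A
    proof (cases "card A \<le> 1")
      case True
      then show ?thesis using N1 by (meson le_trans one_le_power)
    next
      case False
      then have A2: "2 \<le> card A" by simp
      obtain p0 where p0: "p0 \<in> F" "A = cls x F p0" using A by blast
      have st: "finite A \<and> A \<subseteq> Pset x \<rho> s \<and> tau x F < tau x A
         \<and> d (node x F) (node x A) = tau x A - tau x F
         \<and> (\<exists>w\<in>M. (\<forall>p\<in>A. gp x w p \<le> tau x A) \<and> \<rho> < d w (node x A))"
        by (rule cls_step[OF ctx p0 A2])
      then have finA: "finite A" and AP: "A \<subseteq> Pset x \<rho> s" and tlt: "tau x F < tau x A"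
        and dn: "d (node x F) (node x A) = tau x A - tau x F" by auto
      obtain w' where w': "w' \<in> M" "\<And>p. p\<in>A \<Longrightarrow> gp x w' p \<le> tau x A" "\<rho> < d w' (node x A)"
        using st by blast
      have gA: "branch_point m (node x A) \<and> \<rho> \<le> Hbr m (node x A)" using good[OF x rho s0 finA AP A2 val w'] .
      have ne: "node x F \<noteq> node x A" using dn tlt nodeM[OF x rho s0 finA AP A2] by auto
      have "min (Hbr m (node x F)) (Hbr m (node x A)) / C \<le> d (node x F) (node x A)"
        using ubs gF gA ne unfolding uniform_branch_separation_def by blast
      moreover have "\<rho> / C \<le> min (Hbr m (node x F)) (Hbr m (node x A)) / C"
        using gF gA Cp by (simp add: divide_right_mono)
      ultimately have "\<rho> / C \<le> tau x A - tau x F" using dn by simp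
      then have "s - tau x A \<le> real k * (\<rho> / C)" using sk by (simp add: algebra_simps)
      then show ?thesis using Suc.IH finA AP A2 w' by blast
    qed
    have "card F \<le> N * N ^ k"
      by (rule card_sum_bound[OF fin cls_union[OF ctx] cls_count[OF ctx val] each]) (auto intro: finite_imageI fin)
    then show "card F \<le> N ^ Suc k" by simp
  qed
qed

lemma Pbound:
  assumes x: "x \<in> M" and rho: "0 < \<rho>" and s0: "0 \<le> s" and sk: "s \<le> real k * (\<rho> / C)"
    and fin: "finite F" and FP: "F \<subseteq> Pset x \<rho> s"
  shows "card F \<le> N ^ Suc k"
proof (cases "card F \<le> 1")
  case True
  then show ?thesis using N1 by (meson le_trans one_le_power)
next
  case False
  then have F2: "2 \<le> card F" by simp
  note ctx = x rho s0 fin FP F2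
  have each: "card A \<le> N ^ k" if A: "A \<in> cls x F ` F" for A
  proof (cases "card A \<le> 1")
    case True
    then show ?thesis using N1 by (meson le_trans one_le_power)
  next
    case False
    then have A2: "2 \<le> card A" by simp
    obtain p0 where p0: "p0 \<in> F" "A = cls x F p0" using A by blast
    have st: "finite A \<and> A \<subseteq> Pset x \<rho> s \<and> tau x F < tau x A
       \<and> d (node x F) (node x A) = tau x A - tau x F
       \<and> (\<exists>w\<in>M. (\<forall>p\<in>A. gp x w p \<le> tau x A) \<and> \<rho> < d w (node x A))"
      by (rule cls_step[OF ctx p0 A2])
    then have finA: "finite A" and AP: "A \<subseteq> Pset x \<rho> s" by auto
    have "0 \<le> tau x A" using tau_ge0[OF x rho s0 finA AP A2] .
    then have "s - tau x A \<le> real k * (\<rho> / C)" using sk by simp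
    then show ?thesis using main[OF x rho s0, of k] finA AP A2 st by blast
  qed
  have "card F \<le> N * N ^ k"
    by (rule card_sum_bound[OF fin cls_union[OF ctx] cls_count[OF ctx val] each]) (auto intro: finite_imageI fin)
  then show ?thesis by simp
qed

lemma Pfinite:
  assumes x: "x \<in> M" and rho: "0 < \<rho>" and s0: "0 \<le> s" and sk: "s \<le> real k * (\<rho> / C)"
  shows "finite (Pset x \<rho> s) \<and> card (Pset x \<rho> s) \<le> N ^ Suc k"
  by (rule finite_if_finite_subsets_card_bdd) (use Pbound[OF x rho s0 sk] in blast)

end

end

lemma doubling_tree:
  fixes N :: nat and C :: real and m :: "'a metric" and k0 :: nat
  assumes tr: "metric_tree m" and ge: "geodesic_space m" and val: "valence_le m N"
    and ubs: "uniform_branch_separation m C" and Cp: "0 < C" and N1: "1 \<le> N"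
    and k0: "6 * C \<le> real k0"
  shows "doubling m (1 + 7 * real (N ^ Suc k0))"
proof -
  interpret tctx m by unfold_locales (rule tr, rule ge)
  show ?thesis unfolding doubling_def
  proof (intro ballI allI impI)
    fix x r assume x: "x \<in> M" and r: "(0::real) < r"
    define \<rho> where "\<rho> = r / 8"
    have rho: "0 < \<rho>" using r by (simp add: \<rho>_def)
    define P where "P j = Pset x \<rho> (real j * \<rho>)" for j :: nat
    have Pj: "finite (P j) \<and> card (P j) \<le> N ^ Suc k0" if j: "j < 7" for j
    proof -
      have "real j * \<rho> \<le> 6 * \<rho>" using j rho by (intro mult_right_mono) auto
      also have "6 * \<rho> \<le> real k0 * (\<rho> / C)"
      proof -
        have "6 * C * \<rho> \<le> real k0 * \<rho>" using k0 rho by (intro mult_right_mono) auto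
        then show ?thesis using Cp by (simp add: field_simps)
      qed
      finally have sk: "real j * \<rho> \<le> real k0 * (\<rho> / C)" .
      show ?thesis unfolding P_def by (rule Pfinite[OF val ubs Cp N1 x rho _ sk]) (use rho in simp)
    qed
    define F where "F = insert x (\<Union>j\<in>{..<7}. P j)"
    have finU: "finite (\<Union>j\<in>{..<7}. P j)" using Pj by auto
    have "card (\<Union>j\<in>{..<7}. P j) \<le> (\<Sum>j\<in>{..<7}. card (P j))" by (rule card_UN_le) simp
    also have "\<dots> \<le> (\<Sum>j\<in>{..<(7::nat)}. N ^ Suc k0)" using Pj by (intro sum_mono) auto
    also have "\<dots> = 7 * N ^ Suc k0" by simp
    finally have cU: "card (\<Union>j\<in>{..<7}. P j) \<le> 7 * N ^ Suc k0" .
    have "card F \<le> Suc (card (\<Union>j\<in>{..<7}. P j))" unfolding F_def using card_insert_le_m1 finU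
      by (metis card_insert_if le_SucI order_refl)
    then have "card F \<le> 1 + 7 * N ^ Suc k0" using cU by simp
    then have "real (card F) \<le> real (1 + 7 * N ^ Suc k0)" by (simp only: of_nat_le_iff)
    then have cF: "real (card F) \<le> 1 + 7 * real (N ^ Suc k0)" by simp
    have finF: "finite F" using finU by (simp add: F_def)
    have FM: "F \<subseteq> M" using x by (auto simp: F_def P_def Pset_def)
    have cov: "mball_of m x r \<subseteq> (\<Union>c\<in>F. mball_of m c (r / 2))"
    proof
      fix z assume "z \<in> mball_of m x r"
      then have z: "z \<in> M" and dz: "d x z < r" by auto
      define j where "j = \<lfloor>d x z / \<rho>\<rfloor>"
      have j1: "real_of_int j \<le> d x z / \<rho>" and j2: "d x z / \<rho> < real_of_int j + 1" unfolding j_def by linarith+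
      have j0: "0 \<le> j" unfolding j_def using rho by simp
      have jr1: "real_of_int j * \<rho> \<le> d x z" using j1 rho by (simp add: pos_le_divide_eq)
      have jr2: "d x z < (real_of_int j + 1) * \<rho>" using j2 rho by (simp add: pos_divide_less_eq)
      have j8: "j < 8"
      proof -
        have "real_of_int j * \<rho> < 8 * \<rho>" using jr1 dz by (simp add: \<rho>_def)
        then have "real_of_int j < 8" using rho by simp
        then show ?thesis by simp
      qed
      show "z \<in> (\<Union>c\<in>F. mball_of m c (r / 2))"
      proof (cases "j = 0")
        case True
        then have "d x z < \<rho>" using jr2 by simp
        then have "z \<in> mball_of m x (r/2)" using x z rho by (simp add: \<rho>_def)
        then show ?thesis by (auto simp: F_def)
      next
        case False
        define i where "i = nat (j - 1)"
        have ii: "real i = real_of_int j - 1" using False j0 by (simp add: i_def)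
        have i7: "i < 7" using j8 False j0 by (simp add: i_def)
        define t where "t = real i * \<rho>"
        have t0: "0 \<le> t" using rho by (simp add: t_def)
        have e: "real_of_int j = real i + 1" using ii by simp
        have "real_of_int j * \<rho> = t + \<rho>" unfolding e t_def by (simp add: ring_distribs)
        then have tz: "t + \<rho> \<le> d x z" using jr1 by linarith
        have tt: "t \<in> {0..d x z}" using t0 tz rho by simp
        define p where "p = geo x z t"
        have pM: "p \<in> M" using geoM[OF x z tt] by (simp add: p_def)
        have ps: "p \<in> seg x z" using geo_in_seg[OF x z tt] by (simp add: p_def)
        have dp: "d x p = t" using geo_dist0[OF x z tt] by (simp add: p_def)
        have "p \<in> P i" unfolding P_def Pset_def using pM dp ps z tz t_def by auto
        then have pF: "p \<in> F" using i7 by (auto simp: F_def)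
        have "d p z = d x z - t" using geo_dist1[OF x z tt] by (simp add: p_def)
        also have "\<dots> < 2 * \<rho>"
        proof -
          have "(real_of_int j + 1) * \<rho> = t + 2 * \<rho>" unfolding e t_def by (simp add: ring_distribs)
          then show ?thesis using jr2 by linarith
        qed
        also have "\<dots> < r / 2" using r by (simp add: \<rho>_def)
        finally have "z \<in> mball_of m p (r/2)" using pM z by simp
        then show ?thesis using pF by blast
      qed
    qed
    show "\<exists>F. finite F \<and> F \<subseteq> M \<and> real (card F) \<le> 1 + 7 * real (N ^ Suc k0) \<and>
             mball_of m x r \<subseteq> (\<Union>c\<in>F. mball_of m c (r / 2))"
      using finF FM cF cov by blast
  qed
qed

theorem lemma2p6:
  fixes N :: nat and C :: real
  assumes "N \<ge> 2" and "C \<ge> 1"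
  shows "\<exists>D>0. \<forall>m :: 'a metric.
           metric_tree m \<and> geodesic_space m \<and> valence_le m N \<and>
           uniform_branch_separation m C \<longrightarrow> doubling m D"
proof -
  define k0 where "k0 = nat \<lceil>6 * C\<rceil>"
  have k0: "6 * C \<le> real k0" unfolding k0_def by linarith
  have Cp: "0 < C" and N1: "1 \<le> N" using assms by auto
  have pos: "0 < 1 + 7 * real (N ^ Suc k0)" by (simp add: add_pos_nonneg)
  show ?thesis
    using pos doubling_tree[OF _ _ _ _ Cp N1 k0] by blast
qed

end
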